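(* Define $F:\mathbb{N}\to\mathbb{N}$ by $F(n)=(n-1)/3$ if $n\equiv1\pmod 3$; $F(n)=n/2$ if $n\equiv 0$ or $n\equiv2\pmod 6$; $F(n)=(3n+1)/2$ if $n\equiv3$ or $n\equiv5\pmod6$. Then for every $n\in\mathbb{N}^+$ there exists $k\in\mathbb{N}$ with $F^k(n)=1$.
   Context: $F^k$ denotes the $k$-fold iterate of $F$. *)

theory Defs
  imports Main
begin

definition F :: "nat \<Rightarrow> nat" where
  "F n = (if n mod 3 = 1 then (n - 1) div 3
          else if n mod 6 = 0 \<or> n mod 6 = 2 then n div 2
          else (3 * n + 1) div 2)"

end

theory Submission
  imports Defs
begin

lemma F1: "F (3*q+1) = q" unfolding F_def by simp
lemma F2: "F (6*q+2) = 3*q+1"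
proof -
  have "(6*q+2) mod 3 = (2::nat)" by presburger
  moreover have "(6*q+2) mod 6 = (2::nat)" by presburger
  ultimately show ?thesis unfolding F_def by simp
qed
lemma F0: "F (6*q) = 3*q"
proof -
  have "(6*q) mod 3 = (0::nat)" by presburger
  moreover have "(6*q) mod 6 = (0::nat)" by presburger
  ultimately show ?thesis unfolding F_def by simp
qed
lemma F3: "F (6*a+3) = 9*a+5"
proof -
  have "(6*a+3) mod 3 = (0::nat)" by presburger
  moreover have "(6*a+3) mod 6 = (3::nat)" by presburger
  moreover have "(3*(6*a+3)+1) div 2 = 9*a+5" by presburger
  ultimately show ?thesis unfolding F_def by simp
qed
lemma F5: "c \<ge> 1 \<Longrightarrow> F (6*c-1) = 9*c-1"
proof -
  assume c: "c \<ge> 1"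
  then obtain d where d: "c = Suc d" by (cases c) auto
  have e: "6*c-1 = 6*d+5" "9*c-1 = 9*d+8" using d by simp_all
  have "(6*d+5) mod 3 = (2::nat)" by presburger
  moreover have "(6*d+5) mod 6 = (5::nat)" by presburger
  moreover have "(3*(6*d+5)+1) div 2 = 9*d+8" by presburger
  ultimately show ?thesis unfolding F_def e by simp
qed

lemma G: "m \<ge> 1 \<Longrightarrow> (F^^j) (3*(2^j*m - 1)+2) = 3*(3^j*m - 1)+2"
proof (induction j arbitrary: m)
  case 0 then show ?case by simp
next
  case (Suc j)
  define c where "c = 2^j*m"
  have c1: "c \<ge> 1" using Suc.prems by (simp add: c_def)
  have e0: "2^(Suc j)*m = 2*c" by (simp add: c_def)
  have e0': "2^j*(3*m) = 3*c" by (simp add: c_def)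
  have e1: "3*(2^(Suc j)*m - 1)+2 = 6*c-1" using c1 e0 by arith
  have e2: "9*c-1 = 3*(2^j*(3*m) - 1)+2" using c1 e0' by arith
  have "(F^^(Suc j)) (3*(2^(Suc j)*m - 1)+2) = (F^^j) (F (6*c-1))"
    unfolding e1 by (simp only: funpow_Suc_right comp_apply)
  also have "\<dots> = (F^^j) (3*(2^j*(3*m) - 1)+2)" using F5[OF c1] e2 by simp
  also have "\<dots> = 3*(3^j*(3*m) - 1)+2" using Suc.IH Suc.prems by simp
  finally show ?case by (simp add: mult.assoc mult.left_commute)
qed

lemma H: "(F^^i) ((3^(i+l)*(2*p+1)-1) div 2) = (3^l*(2*p+1)-1) div 2"
proof (induction i)
  case 0 then show ?case by simp
next
  case (Suc i)
  define t where "t = 3^(i+l)*(2*p+1)"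
  have "odd t" by (simp add: t_def)
  then obtain u where u: "t = 2*u+1" by (metis oddE)
  have e3: "3^(Suc i+l)*(2*p+1) = 3*t" by (simp add: t_def mult.assoc)
  have e4: "(3*t-1) div 2 = 3*u+1" "(t-1) div 2 = u" using u by simp_all
  have e1: "(3^(Suc i+l)*(2*p+1)-1) div 2 = 3*((t-1) div 2)+1"
    using e3 e4 by simp
  have "(F^^(Suc i)) ((3^(Suc i+l)*(2*p+1)-1) div 2) = (F^^i) ((t-1) div 2)"
    unfolding e1 by (simp only: funpow_Suc_right comp_apply F1)
  then show ?case using Suc.IH by (simp add: t_def)
qed

lemma decomp: "(c::nat) \<ge> 1 \<Longrightarrow> \<exists>j p. c = 2^j*(2*p+1)"
proof (induction c rule: less_induct)
  case (less c)
  show ?case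
  proof (cases "even c")
    case True
    then obtain d where d: "c = 2*d" by blast
    with less.prems have "d < c" "d \<ge> 1" by auto
    then obtain j p where "d = 2^j*(2*p+1)" using less.IH by blast
    then have "c = 2^Suc j*(2*p+1)" using d by simp
    then show ?thesis by blast
  next
    case False
    then obtain p where "c = 2*p+1" by (metis oddE)
    then have "c = 2^0*(2*p+1)" by simp
    then show ?thesis by blast
  qed
qed

lemma class2: "odd (b::nat) \<Longrightarrow> \<exists>k. 1 \<le> (F^^k) (3*b+2) \<and> (F^^k) (3*b+2) \<le> b"
proof -
  assume ob: "odd b"
  obtain j p where jp: "b+1 = 2^j*(2*p+1)" using decomp[of "b+1"] by auto
  have j1: "j \<ge> 1"
  proof (rule ccontr)
    assume "\<not> j \<ge> 1" then have "j = 0" by simp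
    then have "b = 2*p" using jp by simp
    then show False using ob by simp
  qed
  have bb: "b = 2^j*(2*p+1) - 1" using jp by simp
  have s1: "(F^^j) (3*b+2) = 3*(3^j*(2*p+1) - 1)+2" using G[of "2*p+1" j] bb by simp
  define t where "t = 3^j*(2*p+1)"
  have "odd t" by (simp add: t_def)
  then obtain u where u: "t = 2*u+1" by (metis oddE)
  have s2: "(F^^(Suc (Suc j))) (3*b+2) = u"
  proof -
    have "(F^^(Suc (Suc j))) (3*b+2) = F (F (3*(t-1)+2))" using s1 by (simp add: t_def)
    also have "3*(t-1)+2 = 6*u+2" using u by simp
    also have "F (F (6*u+2)) = u" by (simp only: F2 F1)
    finally show ?thesis .
  qed
  have ueq: "u = (3^(j+0)*(2*p+1)-1) div 2" using u t_def by simp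
  show ?thesis
  proof (cases "p = 0")
    case False
    have "(F^^(j + Suc (Suc j))) (3*b+2) = (F^^j) u" by (simp only: funpow_add comp_apply s2)
    also have "\<dots> = p" using H[of j 0 p] ueq by simp
    finally have v: "(F^^(j + Suc (Suc j))) (3*b+2) = p" .
    have "2^1 \<le> (2::nat)^j" using j1 by (rule power_increasing) simp
    then have "2*(2*p+1) \<le> 2^j*(2*p+1)" by (intro mult_right_mono) auto
    then have "2*(2*p+1) \<le> b+1" by (simp only: jp)
    then have "p \<le> b" by presburger
    then show ?thesis using v False by (intro exI[of _ "j + Suc (Suc j)"]) simp
  next
    case True
    have ueq2: "u = (3^((j-1)+1)*(2*p+1)-1) div 2" using ueq j1 by simp
    have "(F^^((j-1) + Suc (Suc j))) (3*b+2) = (F^^(j-1)) u" by (simp only: funpow_add comp_apply s2)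
    also have "\<dots> = (3^1*(2*p+1)-1) div 2" using H[of "j-1" 1 p] ueq2 by simp
    also have "\<dots> = 1" using True by simp
    finally have v: "(F^^((j-1) + Suc (Suc j))) (3*b+2) = 1" .
    have "b \<ge> 1" using ob by (cases b) auto
    then show ?thesis using v by (intro exI[of _ "(j-1) + Suc (Suc j)"]) simp
  qed
qed

lemma descent: "n \<ge> 2 \<Longrightarrow> \<exists>k. 1 \<le> (F^^k) n \<and> (F^^k) n < n"
proof -
  assume n2: "n \<ge> 2"
  have "n mod 3 = 1 \<or> n mod 6 = 0 \<or> n mod 6 = 2 \<or> n mod 6 = 3 \<or> n mod 6 = 5" by presburger
  moreover
  { assume "n mod 3 = 1"
    then have q: "n = 3*(n div 3)+1" using div_mult_mod_eq[of n 3] by simp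
    define q where "q = n div 3"
    note q = q[folded q_def]
    then have "(F^^1) n = q" using F1[of q] by simp
    moreover have "1 \<le> q" "q < n" using q n2 by auto
    ultimately have ?thesis by metis }
  moreover
  { assume "n mod 6 = 0"
    then have q: "n = 6*(n div 6)" using div_mult_mod_eq[of n 6] by simp
    define q where "q = n div 6"
    note q = q[folded q_def]
    then have "(F^^1) n = 3*q" using F0[of q] by simp
    moreover have "1 \<le> 3*q" "3*q < n" using q n2 by auto
    ultimately have ?thesis by metis }
  moreover
  { assume "n mod 6 = 2"
    then have q: "n = 6*(n div 6)+2" using div_mult_mod_eq[of n 6] by simp
    define q where "q = n div 6"
    note q = q[folded q_def]
    then have "(F^^1) n = 3*q+1" using F2[of q] by (simp del: F2)
    moreover have "1 \<le> 3*q+1" "3*q+1 < n" using q n2 by auto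
    ultimately have ?thesis by metis }
  moreover
  { assume "n mod 6 = 5"
    then have q: "n = 6*(n div 6)+5" using div_mult_mod_eq[of n 6] by simp
    define q where "q = n div 6"
    note q = q[folded q_def]
    then have b: "n = 3*(2*q+1)+2" "odd (2*q+1)" using q by simp_all
    then have ?thesis using class2[of "2*q+1"] by auto }
  moreover
  { assume "n mod 6 = 3"
    then have a: "n = 6*(n div 6)+3" using div_mult_mod_eq[of n 6] by simp
    define a where "a = n div 6"
    note a = a[folded a_def]
    have fa: "(F^^1) n = 3*(3*a+1)+2" using a F3 by simp
    have ?thesis
    proof (cases "even a")
      case True
      then have "odd (3*a+1)" by simp
      then obtain k where k: "1 \<le> (F^^k) (3*(3*a+1)+2)" "(F^^k) (3*(3*a+1)+2) \<le> 3*a+1"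
        using class2 by blast
      have "(F^^(k+1)) n = (F^^k) (3*(3*a+1)+2)" using fa by (simp only: funpow_add comp_apply)
      then show ?thesis using k a by (intro exI[of _ "k+1"]) simp
    next
      case False
      then obtain v where v: "a = 2*v+1" by (metis oddE)
      have "(F^^3) n = F (F (3*(3*a+1)+2))" using fa by (simp add: numeral_3_eq_3)
      also have "3*(3*a+1)+2 = 6*(3*v+2)+2" using v by simp
      also have "F (F (6*(3*v+2)+2)) = 3*v+2" by (simp only: F2 F1)
      finally show ?thesis using v a by (intro exI[of _ 3]) simp
    qed }
  ultimately show ?thesis by argo
qed

theorem mainTheorem10:
  fixes n :: nat
  assumes "n \<ge> 1"
  shows "\<exists>k::nat. (F ^^ k) n = 1"
  using assms
proof (induction n rule: less_induct)
  case (less n)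
  show ?case
  proof (cases "n = 1")
    case True then show ?thesis by (intro exI[of _ 0]) simp
  next
    case False
    then have "n \<ge> 2" using less.prems by simp
    then obtain k where k: "1 \<le> (F^^k) n" "(F^^k) n < n" using descent by blast
    then obtain k' where "(F^^k') ((F^^k) n) = 1" using less.IH by blast
    then have "(F^^(k'+k)) n = 1" by (simp add: funpow_add)
    then show ?thesis by blast
  qed
qed

end
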